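(* Let $\mathcal{H}$ be a separable infinite-dimensional complex Hilbert space, let $T\in\mathscr{B}(\mathcal{H})$ have dense range, let $x_0\in\mathcal{H}$ be nonzero and let $0<\varepsilon<\|x_0\|$. Set $$\mathcal{V}_{x_0,\varepsilon}:=\{x\in\mathcal{H}:\|x-x_0\|=\varepsilon\}\cap\{x\in\mathcal{H}:\|x\|\leqslant\sqrt{\|x_0\|^2-\varepsilon^2}\}.$$ Then $Ty_{x_0,\varepsilon}\in\mathcal{V}_{x_0,\varepsilon}$, and $\|y_{x_0,\varepsilon}\|\leqslant\|y\|$ for every $y\in\mathcal{H}$ with $Ty\in\mathcal{V}_{x_0,\varepsilon}$; i.e. $y_{x_0,\varepsilon}$ is the vector of smallest norm whose image under $T$ lies in $\mathcal{V}_{x_0,\varepsilon}$.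
   Context: For $T\in\mathscr{B}(\mathcal{H})$ with dense range, $x_0\neq 0$ and $0<\varepsilon<\|x_0\|$, the extremal vector $y_{x_0,\varepsilon}$ is the unique vector $y_0\in\mathcal{H}$ with $\|Ty_0-x_0\|\leqslant\varepsilon$ and $\|y_0\|=\inf\{\|y\|:\|Ty-x_0\|\leqslant\varepsilon\}$. *)

theory Defs
  imports "HOL-Analysis.Analysis"
begin

text \<open>Complex Hilbert spaces: a real inner product space that is complete (the real
inner product being the real part of the complex one) together with a complex
scalar multiplication extending the real one and compatible with the norm.
By polarization this is exactly a complex Hilbert space.\<close>

class complex_hilbert = real_inner + complete_space +
  fixes scaleC :: "complex \<Rightarrow> 'a \<Rightarrow> 'a" (infixr \<open>*\<^sub>C\<close> 75)
  assumes scaleR_scaleC: "scaleR r x = scaleC (of_real r) x"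
    and scaleC_add_right: "scaleC a (x + y) = scaleC a x + scaleC a y"
    and scaleC_add_left: "scaleC (a + b) x = scaleC a x + scaleC b x"
    and scaleC_scaleC: "scaleC a (scaleC b x) = scaleC (a * b) x"
    and scaleC_one: "scaleC 1 x = x"
    and norm_scaleC: "norm (scaleC a x) = cmod a * norm x"

definition cspan :: "'a::complex_hilbert set \<Rightarrow> 'a set" where
  "cspan S = {(\<Sum>v\<in>t. scaleC (c v) v) | t c. finite t \<and> t \<subseteq> S}"

definition bounded_clinear_op :: "('a::complex_hilbert \<Rightarrow> 'a) \<Rightarrow> bool" where
  "bounded_clinear_op T \<longleftrightarrow> bounded_linear T \<and> (\<forall>c x. T (scaleC c x) = scaleC c (T x))"

text \<open>The extremal vector y_{x0,eps}: the unique y0 with norm (T y0 - x0) \<le> eps and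
norm y0 = inf{norm y : norm (T y - x0) \<le> eps}.\<close>
definition extremal_vector :: "('a::complex_hilbert \<Rightarrow> 'a) \<Rightarrow> 'a \<Rightarrow> real \<Rightarrow> 'a" where
  "extremal_vector T x0 \<epsilon> = (THE y0. norm (T y0 - x0) \<le> \<epsilon> \<and>
      norm y0 = Inf {norm y | y. norm (T y - x0) \<le> \<epsilon>})"

definition V_set :: "'a::complex_hilbert \<Rightarrow> real \<Rightarrow> 'a set" where
  "V_set x0 \<epsilon> = {x. norm (x - x0) = \<epsilon>} \<inter> {x. norm x \<le> sqrt ((norm x0)\<^sup>2 - \<epsilon>\<^sup>2)}"

end

theory Submission
  imports Defs
begin

lemma parallelogram_law:
  fixes a b :: "'a::real_inner"
  shows "norm (a+b)^2 + norm (a-b)^2 = 2*norm a^2 + 2*norm b^2"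
  by (simp add: power2_norm_eq_inner inner_add inner_diff inner_commute algebra_simps)

lemma aux_lin:
  fixes a x y z c :: real
  shows "x \<le> z \<Longrightarrow> y \<le> z \<Longrightarrow> a < 2*x + 2*y \<Longrightarrow> 4*z < c \<Longrightarrow> a < c"
  by linarith

lemma aux_sq:
  fixes a e :: real
  shows "a^2 < e^2 \<Longrightarrow> 0 < e \<Longrightarrow> 0 \<le> a \<Longrightarrow> a < e"
  using power_less_imp_less_base[of a 2 e] by simp

lemma min_norm_exists:
  fixes C :: "'a::{real_inner,complete_space} set"
  assumes cl: "closed C" and cv: "convex C" and ne: "C \<noteq> {}"
  shows "\<exists>y\<in>C. \<forall>z\<in>C. norm y \<le> norm z"
proof -
  define d where "d = Inf (norm ` C)"
  have bdd: "bdd_below (norm ` C)" by (rule bdd_belowI[of _ 0]) auto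
  have dle: "\<forall>z\<in>C. d \<le> norm z" unfolding d_def using bdd by (auto intro: cInf_lower)
  have d0: "0 \<le> d" unfolding d_def using ne by (auto intro: cInf_greatest)
  have mid: "2 * d \<le> norm (a + b)" if "a \<in> C" "b \<in> C" for a b
  proof -
    have "(1/2) *\<^sub>R a + (1/2) *\<^sub>R b \<in> C"
      using cv that unfolding convex_def by auto
    then have "d \<le> norm ((1/2) *\<^sub>R a + (1/2) *\<^sub>R b)" using dle by auto
    also have "(1/2) *\<^sub>R a + (1/2) *\<^sub>R b = (1/2) *\<^sub>R (a + b)" by (simp add: scaleR_add_right)
    finally show ?thesis by simp
  qed
  have ex: "\<exists>y\<in>C. norm y ^ 2 < d^2 + inverse (real (Suc n))" for n
  proof -
    have "d < sqrt (d^2 + inverse (real (Suc n)))"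
    proof (rule real_less_rsqrt)
      have "0 < inverse (real (Suc n))" by simp
      then show "d^2 < d^2 + inverse (real (Suc n))" by linarith
    qed
    then obtain r where "r \<in> norm ` C" "r < sqrt (d^2 + inverse (real (Suc n)))"
      using cInf_lessD[of "norm ` C"] ne unfolding d_def by auto
    then obtain y where y: "y \<in> C" "norm y < sqrt (d^2 + inverse (real (Suc n)))" by auto
    then have "norm y ^ 2 < (sqrt (d^2 + inverse (real (Suc n))))^2"
      by (intro power_strict_mono) auto
    also have "\<dots> = d^2 + inverse (real (Suc n))" by (simp add: add_nonneg_nonneg)
    finally show ?thesis using y by auto
  qed
  then have "\<forall>n. \<exists>y. y \<in> C \<and> norm y ^ 2 < d^2 + inverse (real (Suc n))" by blast
  then have "\<exists>Y. \<forall>n. Y n \<in> C \<and> norm (Y n) ^ 2 < d^2 + inverse (real (Suc n))" by (rule choice)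
  then obtain Y where Y0: "\<forall>n. Y n \<in> C \<and> norm (Y n) ^ 2 < d^2 + inverse (real (Suc n))" by blast
  have Y: "\<And>n. Y n \<in> C" "\<And>n. norm (Y n) ^ 2 < d^2 + inverse (real (Suc n))" using Y0 by simp_all
  have dist_bd: "norm (Y m - Y n) ^ 2 < 2 * inverse (real (Suc m)) + 2 * inverse (real (Suc n))" for m n
  proof -
    have p: "norm (Y m + Y n)^2 + norm (Y m - Y n)^2 = 2*norm (Y m)^2 + 2*norm (Y n)^2"
      by (rule parallelogram_law)
    have "(2*d)^2 \<le> norm (Y m + Y n)^2"
      using mid[OF Y(1) Y(1)] d0 by (intro power_mono) auto
    then show ?thesis using p Y(2)[of m] Y(2)[of n] by (simp add: power_mult_distrib)
  qed
  have "Cauchy Y"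
  proof (rule CauchyI)
    fix e :: real assume e: "0 < e"
    obtain M :: nat where M: "4 / e^2 < real M" using reals_Archimedean2 by blast
    have Mpos: "0 < real (Suc M)" by simp
    have Me: "4 * inverse (real (Suc M)) < e^2"
    proof -
      have h1: "4 < real M * e^2" using M e by (simp add: field_simps)
      have "0 < e^2" using e by simp
      moreover have "e^2 * real (Suc M) = e^2 + real M * e^2" by (simp add: algebra_simps)
      ultimately have "4 < e^2 * real (Suc M)" using h1 by linarith
      then show ?thesis using Mpos by (simp add: field_simps)
    qed
    show "\<exists>M. \<forall>m\<ge>M. \<forall>n\<ge>M. norm (Y m - Y n) < e"
    proof (intro exI allI impI)
      fix m n assume mn: "M \<le> m" "M \<le> n"
      have "inverse (real (Suc m)) \<le> inverse (real (Suc M))"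
        using mn by (simp add: le_imp_inverse_le)
      moreover have "inverse (real (Suc n)) \<le> inverse (real (Suc M))"
        using mn by (simp add: le_imp_inverse_le)
      ultimately have "norm (Y m - Y n) ^ 2 < e^2" using dist_bd[of m n] Me by (rule aux_lin)
      then show "norm (Y m - Y n) < e" using e by (rule aux_sq) simp
    qed
  qed
  then obtain y where lim: "Y \<longlonglongrightarrow> y" using Cauchy_convergent_iff convergent_def by blast
  have yC: "y \<in> C" using closed_sequentially[OF cl] Y(1) lim by blast
  have l1: "(\<lambda>n. norm (Y n) ^ 2) \<longlonglongrightarrow> norm y ^ 2"
    by (intro tendsto_intros lim)
  have l2: "(\<lambda>n. d^2 + inverse (real (Suc n))) \<longlonglongrightarrow> d^2 + 0"
    by (intro tendsto_intros LIMSEQ_inverse_real_of_nat)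
  have "norm y ^ 2 \<le> d^2 + 0"
  proof (rule LIMSEQ_le[OF l1 l2])
    have "\<forall>n\<ge>0. norm (Y n) ^ 2 \<le> d^2 + inverse (real (Suc n))"
      using less_imp_le[OF Y(2)] by blast
    then show "\<exists>N. \<forall>n\<ge>N. norm (Y n) ^ 2 \<le> d^2 + inverse (real (Suc n))" by blast
  qed
  then have "norm y ^ 2 \<le> d ^ 2" by simp
  then have "norm y \<le> d" using d0 by (rule power2_le_imp_le)
  then have "\<forall>z\<in>C. norm y \<le> norm z" using dle by (meson order_trans)
  then show ?thesis using yC by blast
qed

lemma min_norm_unique:
  fixes C :: "'a::real_inner set"
  assumes cv: "convex C" and y: "y \<in> C" "\<forall>z\<in>C. norm y \<le> norm z"
    and y': "y' \<in> C" "\<forall>z\<in>C. norm y' \<le> norm z"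
  shows "y = y'"
proof -
  have e1: "norm y \<le> norm y'" using y(2) y'(1) by blast
  have e2: "norm y' \<le> norm y" using y'(2) y(1) by blast
  have eq: "norm y = norm y'" using e1 e2 by linarith
  have "(1/2) *\<^sub>R y + (1/2) *\<^sub>R y' \<in> C"
    using cv y y' unfolding convex_def by auto
  then have "norm y \<le> norm ((1/2) *\<^sub>R (y + y'))" using y by (simp add: scaleR_add_right)
  then have "2 * norm y \<le> norm (y + y')" by simp
  then have "(2 * norm y)^2 \<le> norm (y + y')^2" by (intro power_mono) auto
  moreover have "norm (y+y')^2 + norm (y-y')^2 = 2*norm y^2 + 2*norm y'^2"
    by (rule parallelogram_law)
  moreover have "2*norm y^2 + 2*norm y'^2 = (2 * norm y)^2" using eq by (simp add: power_mult_distrib)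
  ultimately have "norm (y - y')^2 \<le> 0" by linarith
  then have "norm (y - y') = 0" by simp
  then show ?thesis by simp
qed

theorem mainTheorem5:
  fixes T :: "'a::complex_hilbert \<Rightarrow> 'a" and x0 :: 'a and \<epsilon> :: real
  assumes separable: "separable_space (euclidean :: 'a topology)"
    and infinite_dim: "\<forall>S. finite S \<longrightarrow> cspan S \<noteq> (UNIV :: 'a set)"
    and T_bounded: "bounded_clinear_op T"
    and dense_range: "closure (range T) = UNIV"
    and x0_nz: "x0 \<noteq> 0"
    and eps_pos: "0 < \<epsilon>" and eps_lt: "\<epsilon> < norm x0"
  shows "T (extremal_vector T x0 \<epsilon>) \<in> V_set x0 \<epsilon> \<and>
         (\<forall>y. T y \<in> V_set x0 \<epsilon> \<longrightarrow> norm (extremal_vector T x0 \<epsilon>) \<le> norm y)"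
proof -
  have bl: "bounded_linear T" using T_bounded unfolding bounded_clinear_op_def by simp
  interpret bounded_linear T by (rule bl)
  define C where "C = {y. norm (T y - x0) \<le> \<epsilon>}"
  have cl: "closed C" unfolding C_def
    by (intro closed_Collect_le continuous_intros) (auto intro: linear_continuous_on bl)
  have cv: "convex C" unfolding C_def convex_def
  proof (intro ballI allI impI, simp)
    fix u v :: 'a and a b :: real
    assume h: "norm (T u - x0) \<le> \<epsilon>" "norm (T v - x0) \<le> \<epsilon>" "0 \<le> a" "0 \<le> b" "a + b = 1"
    have "T (a *\<^sub>R u + b *\<^sub>R v) - x0 = a *\<^sub>R (T u - x0) + b *\<^sub>R (T v - x0)"
      using h(5) by (simp add: add scaleR algebra_simps flip: scaleR_add_left)
    also have "norm \<dots> \<le> a * norm (T u - x0) + b * norm (T v - x0)"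
      using h norm_triangle_ineq[of "a *\<^sub>R (T u - x0)" "b *\<^sub>R (T v - x0)"] by simp
    also have "\<dots> \<le> a * \<epsilon> + b * \<epsilon>" using h by (intro add_mono mult_left_mono) auto
    also have "\<dots> = \<epsilon>" using h(5) by (simp flip: distrib_right)
    finally show "norm (T (a *\<^sub>R u + b *\<^sub>R v) - x0) \<le> \<epsilon>" .
  qed
  have ne: "C \<noteq> {}"
  proof -
    have "x0 \<in> closure (range T)" using dense_range by simp
    then have "\<exists>z\<in>range T. dist z x0 < \<epsilon>" using eps_pos unfolding closure_approachable by blast
    then obtain z where "z \<in> range T" "dist z x0 < \<epsilon>" by blast
    then obtain x where "norm (T x - x0) < \<epsilon>" by (auto simp: dist_norm)
    then have "x \<in> C" unfolding C_def by simp
    then show ?thesis by blast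
  qed
  obtain y0 where y0C: "y0 \<in> C" and y0min: "\<forall>z\<in>C. norm y0 \<le> norm z"
    using min_norm_exists[OF cl cv ne] by blast
  have setEq: "{norm y | y. norm (T y - x0) \<le> \<epsilon>} = norm ` C" unfolding C_def by auto
  have infEq: "Inf (norm ` C) = norm y0"
    by (rule cInf_eq_minimum) (use y0C y0min in auto)
  have ev: "extremal_vector T x0 \<epsilon> = y0"
    unfolding extremal_vector_def setEq infEq
  proof (rule the_equality)
    show "norm (T y0 - x0) \<le> \<epsilon> \<and> norm y0 = norm y0" using y0C unfolding C_def by simp
  next
    fix z assume z: "norm (T z - x0) \<le> \<epsilon> \<and> norm z = norm y0"
    then have zC: "z \<in> C" unfolding C_def by simp
    have "\<forall>w\<in>C. norm z \<le> norm w" using z y0min by simp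
    then show "z = y0" using min_norm_unique[OF cv zC _ y0C y0min] by simp
  qed
  define u where "u = T y0 - x0"
  define w where "w = T y0"
  have y0nz: "y0 \<noteq> 0"
  proof
    assume "y0 = 0"
    then have "norm (T y0 - x0) = norm x0" by (simp add: zero)
    then show False using y0C eps_lt unfolding C_def by simp
  qed
  have key: "\<epsilon> < norm (u - t *\<^sub>R w)" if t: "0 < t" "t < 1" for t
  proof -
    have "norm ((1 - t) *\<^sub>R y0) < norm y0" using t y0nz by simp
    then have "(1 - t) *\<^sub>R y0 \<notin> C" using y0min by (meson not_le)
    moreover have "T ((1 - t) *\<^sub>R y0) - x0 = u - t *\<^sub>R w"
      unfolding u_def w_def by (simp add: scaleR diff scaleR_diff_left)
    ultimately show ?thesis unfolding C_def by simp
  qed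
  have un: "norm u = \<epsilon>"
  proof (rule ccontr)
    assume "norm u \<noteq> \<epsilon>"
    then have lt: "norm u < \<epsilon>" using y0C unfolding C_def u_def by simp
    define t where "t = min (1/2) ((\<epsilon> - norm u) / (2 * (norm w + 1)))"
    have "0 < norm w + 1" by (simp add: add_nonneg_pos)
    then have "0 < (\<epsilon> - norm u) / (2 * (norm w + 1))" using lt by (intro divide_pos_pos) auto
    then have t0: "0 < t" "t < 1" unfolding t_def by auto
    have "t * norm w \<le> ((\<epsilon> - norm u) / (2 * (norm w + 1))) * norm w"
      unfolding t_def by (intro mult_right_mono) auto
    also have "\<dots> < \<epsilon> - norm u"
    proof -
      have "norm w < 2 * (norm w + 1)" by (smt (verit) norm_ge_zero)
      then have prev: "(\<epsilon> - norm u) * norm w < (\<epsilon> - norm u) * (2 * (norm w + 1))"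
        using lt by (intro mult_strict_left_mono) auto
      have c: "0 < 2 * (norm w + 1)" by (smt (verit) norm_ge_zero)
      have "((\<epsilon> - norm u) / (2 * (norm w + 1))) * norm w = ((\<epsilon> - norm u) * norm w) / (2 * (norm w + 1))" by simp
      also have "\<dots> < \<epsilon> - norm u" unfolding pos_divide_less_eq[OF c] by (rule prev)
      finally show ?thesis .
    qed
    finally have "norm u + t * norm w < \<epsilon>" by simp
    moreover have "norm (u - t *\<^sub>R w) \<le> norm u + t * norm w"
      using t0 norm_triangle_ineq4[of u "t *\<^sub>R w"] by simp
    ultimately show False using key[OF t0] by simp
  qed
  have ip: "inner u w \<le> 0"
  proof (rule ccontr)
    assume "\<not> inner u w \<le> 0"
    then have a: "0 < inner u w" by simp
    define b where "b = norm w ^ 2"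
    define t where "t = min (1/2) (inner u w / (b + 1))"
    have b0: "0 \<le> b" unfolding b_def by simp
    have t0: "0 < t" "t < 1" using a b0 unfolding t_def by auto
    have e: "norm (u - t *\<^sub>R w)^2 = norm u ^ 2 - 2 * t * inner u w + t^2 * b"
      unfolding b_def power2_norm_eq_inner by (simp add: inner_diff inner_commute algebra_simps power2_eq_square)
    have "t * b \<le> (inner u w / (b + 1)) * b" unfolding t_def using b0 by (intro mult_right_mono) auto
    also have "\<dots> < 2 * inner u w"
    proof -
      have p: "0 \<le> inner u w * b" using a b0 by simp
      have q: "2 * inner u w * (b + 1) = inner u w * b + (inner u w * b + 2 * inner u w)" by (simp add: algebra_simps)
      have "inner u w * b < 2 * inner u w * (b + 1)" unfolding q using p a by linarith
      then show ?thesis using b0 by (simp add: field_simps)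
    qed
    finally have "t * (t * b) < t * (2 * inner u w)" using t0 by simp
    then have "norm (u - t *\<^sub>R w)^2 < \<epsilon>^2" using e un by (simp add: power2_eq_square algebra_simps)
    then have "norm (u - t *\<^sub>R w) < \<epsilon>" using eps_pos by (rule aux_sq) simp
    then show False using key[OF t0] by simp
  qed
  have "norm w ^ 2 \<le> norm x0 ^ 2 - \<epsilon>^2"
  proof -
    have "x0 = w - u" unfolding u_def w_def by simp
    have "norm (w - u) ^ 2 = norm w ^ 2 - 2 * inner u w + norm u ^ 2"
      unfolding power2_norm_eq_inner by (simp add: inner_diff inner_commute algebra_simps)
    then have "norm x0 ^ 2 = norm w ^ 2 - 2 * inner u w + norm u ^ 2" using \<open>x0 = w - u\<close> by simp
    then show ?thesis using ip un by simp
  qed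
  then have "norm (T y0) \<le> sqrt (norm x0 ^ 2 - \<epsilon>^2)" unfolding w_def by (rule real_le_rsqrt)
  then have V: "T y0 \<in> V_set x0 \<epsilon>" using un unfolding V_set_def u_def by simp
  show ?thesis
  proof (intro conjI allI impI)
    show "T (extremal_vector T x0 \<epsilon>) \<in> V_set x0 \<epsilon>" using V ev by simp
  next
    fix y assume "T y \<in> V_set x0 \<epsilon>"
    then have "y \<in> C" unfolding V_set_def C_def by simp
    then show "norm (extremal_vector T x0 \<epsilon>) \<le> norm y" using ev y0min by simp
  qed
qed

end
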